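(* Let $n\ge3$, let $R^1,\dots,R^n$ be independent variables and let $c^i=c^i(R^i)$ be given functions with $c^i\ne c^j$ for $i\ne j$. Consider the Lagrangian 2-form in the $n+1$ unknown functions $u,\mu^1,\dots,\mu^n$ of $R$: $$\mathcal{L}=\sum_{i<j}L_{ij}\,\mathrm{d}R^i\wedge\mathrm{d}R^j,\qquad L_{ij}=\mu^j_iu_j-\mu^i_ju_i+\frac{(\mu^j-\mu^i)^2}{c^j-c^i}u_iu_j.$$ Then the full system of multiform Euler-Lagrange equations of $\mathcal{L}$ (with respect to variations of $u$ and of each $\mu^i$) is equivalent to the following: (i) for each $j$ the quantity $P_j:=\mu^i_j+\frac{(\mu^i-\mu^j)^2}{c^i-c^j}u_j$ is independent of the choice of $i\ne j$; (ii) $\partial P_i/\partial R^j=\partial P_j/\partial R^i$ for all $i\neq j$; (iii) $u_{ij}=2\frac{\mu^j-\mu^i}{c^j-c^i}u_iu_j$ for all $i\ne j$. Equivalently (locally), there exists a function $P(R)$ such that for all $i\ne j$ $$\mu^i_j=\frac{(\mu^j-\mu^i)^2}{c^j-c^i}u_j+\frac{\partial P}{\partial R^j},\qquad u_{ij}=2\frac{\mu^j-\mu^i}{c^j-c^i}u_iu_j,$$ and the substitution $\tilde\mu^i=\mu^i-P$ transforms this into the system $\tilde\mu^i_j=\frac{(\tilde\mu^j-\tilde\mu^i)^2}{c^j-c^i}u_j$, $u_{ij}=2\frac{\tilde\mu^j-\tilde\mu^i}{c^j-c^i}u_iu_j$.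
   Context: Lower indices denote partial derivatives with respect to the $R$ variables: $u_i=\partial u/\partial R^i$, $\mu^i_j=\partial\mu^i/\partial R^j$, $u_{ij}=\partial^2u/\partial R^i\partial R^j$. $L_{ij}$ is antisymmetric in $i,j$. Multiform Euler-Lagrange equations for several fields $w\in\{u,\mu^1,\dots,\mu^n\}$ are, for all pairwise distinct $i,j,k$: $\frac{\delta_{ij}L_{ij}}{\delta w}=0$, $\frac{\delta_{ij}L_{ij}}{\delta w_j}-\frac{\delta_{ik}L_{ik}}{\delta w_k}=0$, $\frac{\partial L_{ij}}{\partial w_{ij}}+\frac{\partial L_{jk}}{\partial w_{jk}}+\frac{\partial L_{ki}}{\partial w_{ki}}=0$, together with $\frac{\delta_{ij}L_{ij}}{\delta w_k}=0$ ($k\neq i,j$), $\frac{\partial L_{ij}}{\partial w_{k\ell}}=0$ ($k,\ell\ne i,j$), $\frac{\partial L_{ij}}{\partial w_{j\ell}}-\frac{\partial L_{ik}}{\partial w_{k\ell}}=0$ ($\ell\ne i$), where $\frac{\delta_{ij}}{\delta w}=\frac{\partial}{\partial w}-\partial_i\frac{\partial}{\partial w_i}-\partial_j\frac{\partial}{\partial w_j}+\partial_i\partial_j\frac{\partial}{\partial w_{ij}}$, $\frac{\delta_{ij}}{\delta w_j}=\frac{\partial}{\partial w_j}-\partial_i\frac{\partial}{\partial w_{ij}}$, $\frac{\delta_{ij}}{\delta w_k}=\frac{\partial}{\partial w_k}-\partial_i\frac{\partial}{\partial w_{ik}}-\partial_j\frac{\partial}{\partial w_{jk}}$, $\partial_i$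 the total derivative in $R^i$. *)

theory Defs
  imports "HOL-Analysis.Analysis"
begin

text \<open>Points R = (R^1,...,R^n) are vectors of type real^'n, the index type 'n being a
finite type with n = CARD('n) elements.  Fields are indexed by 'n option:
None is u, Some i is mu^i.\<close>

definition pd :: "'n::finite \<Rightarrow> (real^'n \<Rightarrow> real) \<Rightarrow> real^'n \<Rightarrow> real" where
  "pd k f R = deriv (\<lambda>t. f (R + t *\<^sub>R axis k 1)) 0"

definition smooth_on :: "(real^'n::finite) set \<Rightarrow> (real^'n \<Rightarrow> real) \<Rightarrow> bool" where
  "smooth_on U f \<longleftrightarrow> (\<forall>ks :: 'n list. \<forall>R\<in>U. foldr pd ks f differentiable (at R))"

text \<open>Second-order jet coordinates: values w, first derivatives w_k, second derivatives
w_kl (one coordinate for each ordered pair (k,l)).\<close>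
type_synonym 'n jet =
  "('n option \<Rightarrow> real) \<times> ('n option \<Rightarrow> 'n \<Rightarrow> real) \<times> ('n option \<Rightarrow> 'n \<Rightarrow> 'n \<Rightarrow> real)"

definition jv :: "'n jet \<Rightarrow> 'n option \<Rightarrow> real" where "jv J = fst J"
definition jd1 :: "'n jet \<Rightarrow> 'n option \<Rightarrow> 'n \<Rightarrow> real" where "jd1 J = fst (snd J)"
definition jd2 :: "'n jet \<Rightarrow> 'n option \<Rightarrow> 'n \<Rightarrow> 'n \<Rightarrow> real" where "jd2 J = snd (snd J)"

definition dval :: "'n option \<Rightarrow> (real^'n \<Rightarrow> 'n jet \<Rightarrow> real) \<Rightarrow> real^'n \<Rightarrow> 'n jet \<Rightarrow> real" where
  "dval a F R J = deriv (\<lambda>t. F R ((jv J)(a := t), jd1 J, jd2 J)) (jv J a)"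

definition dd1 :: "'n option \<Rightarrow> 'n \<Rightarrow> (real^'n \<Rightarrow> 'n jet \<Rightarrow> real) \<Rightarrow> real^'n \<Rightarrow> 'n jet \<Rightarrow> real" where
  "dd1 a k F R J = deriv (\<lambda>t. F R (jv J, (jd1 J)(a := (jd1 J a)(k := t)), jd2 J)) (jd1 J a k)"

definition dd2 :: "'n option \<Rightarrow> 'n \<Rightarrow> 'n \<Rightarrow> (real^'n \<Rightarrow> 'n jet \<Rightarrow> real) \<Rightarrow> real^'n \<Rightarrow> 'n jet \<Rightarrow> real" where
  "dd2 a k l F R J =
     deriv (\<lambda>t. F R (jv J, jd1 J, (jd2 J)(a := (jd2 J a)(k := (jd2 J a k)(l := t))))) (jd2 J a k l)"

definition jetw :: "('n::finite option \<Rightarrow> real^'n \<Rightarrow> real) \<Rightarrow> real^'n \<Rightarrow> 'n jet" where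
  "jetw w R = ((\<lambda>a. w a R), (\<lambda>a k. pd k (w a) R), (\<lambda>a k l. pd k (pd l (w a)) R))"

definition ev :: "('n::finite option \<Rightarrow> real^'n \<Rightarrow> real) \<Rightarrow> (real^'n \<Rightarrow> 'n jet \<Rightarrow> real) \<Rightarrow> real^'n \<Rightarrow> real" where
  "ev w F R = F R (jetw w R)"

definition flds :: "(real^'n \<Rightarrow> real) \<Rightarrow> ('n \<Rightarrow> real^'n \<Rightarrow> real) \<Rightarrow> 'n option \<Rightarrow> real^'n \<Rightarrow> real" where
  "flds u mu a = (case a of None \<Rightarrow> u | Some i \<Rightarrow> mu i)"

text \<open>Variational derivatives (evaluated on the field w, at R); total derivatives
are partial derivatives of the evaluated expressions.\<close>
definition var0 where
  "var0 L i j w a R =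
     ev w (dval a (L i j)) R
     - pd i (ev w (dd1 a i (L i j))) R
     - pd j (ev w (dd1 a j (L i j))) R
     + pd i (pd j (ev w (dd2 a i j (L i j)))) R"

definition varj where
  "varj L i j w a R = ev w (dd1 a j (L i j)) R - pd i (ev w (dd2 a i j (L i j))) R"

definition vark where  \<comment> \<open>delta_ij / delta w_k, k \<noteq> i,j\<close>
  "vark L i j k w a R =
     ev w (dd1 a k (L i j)) R - pd i (ev w (dd2 a i k (L i j))) R - pd j (ev w (dd2 a j k (L i j))) R"

definition multiform_EL ::
  "('n::finite \<Rightarrow> 'n \<Rightarrow> real^'n \<Rightarrow> 'n jet \<Rightarrow> real) \<Rightarrow> ('n option \<Rightarrow> real^'n \<Rightarrow> real) \<Rightarrow> real^'n \<Rightarrow> bool" where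
  "multiform_EL L w R \<longleftrightarrow>
    (\<forall>a i j k. i \<noteq> j \<and> j \<noteq> k \<and> i \<noteq> k \<longrightarrow>
       var0 L i j w a R = 0
     \<and> varj L i j w a R - varj L i k w a R = 0
     \<and> ev w (dd2 a i j (L i j)) R + ev w (dd2 a j k (L j k)) R + ev w (dd2 a k i (L k i)) R = 0
     \<and> vark L i j k w a R = 0
     \<and> (\<forall>l. l \<noteq> i \<and> l \<noteq> j \<longrightarrow> ev w (dd2 a k l (L i j)) R = 0)
     \<and> (\<forall>l. l \<noteq> i \<longrightarrow> ev w (dd2 a j l (L i j)) R - ev w (dd2 a k l (L i k)) R = 0))"

text \<open>The Lagrangian coefficients
 L_ij = mu^j_i u_j - mu^i_j u_i + (mu^j - mu^i)^2/(c^j - c^i) u_i u_j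
(antisymmetric in i,j, so one formula serves all ordered pairs).\<close>
definition Lag :: "('n::finite \<Rightarrow> real \<Rightarrow> real) \<Rightarrow> 'n \<Rightarrow> 'n \<Rightarrow> real^'n \<Rightarrow> 'n jet \<Rightarrow> real" where
  "Lag c i j R J =
     jd1 J (Some j) i * jd1 J None j - jd1 J (Some i) j * jd1 J None i
     + (jv J (Some j) - jv J (Some i))^2 / (c j (R$j) - c i (R$i)) * jd1 J None i * jd1 J None j"

definition Pf :: "('n::finite \<Rightarrow> real \<Rightarrow> real) \<Rightarrow> (real^'n \<Rightarrow> real) \<Rightarrow> ('n \<Rightarrow> real^'n \<Rightarrow> real)
    \<Rightarrow> 'n \<Rightarrow> 'n \<Rightarrow> real^'n \<Rightarrow> real" where
  "Pf c u mu i j R = pd j (mu i) R + (mu i R - mu j R)^2 / (c i (R$i) - c j (R$j)) * pd j u R"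

end

theory Submission
  imports Defs
begin


lemma line_deriv:
  fixes f :: "real^'n::finite \<Rightarrow> real"
  assumes "(f has_derivative D) (at (y0 + x *\<^sub>R e))"
  shows "((\<lambda>t. f (y0 + t *\<^sub>R e)) has_real_derivative D e) (at x)"
proof -
  have l: "linear D" using assms has_derivative_linear by blast
  have "((\<lambda>t. y0 + t *\<^sub>R e) has_derivative (\<lambda>h. h *\<^sub>R e)) (at x)"
    by (auto intro!: derivative_eq_intros)
  from has_derivative_compose[OF this assms]
  have "((\<lambda>t. f (y0 + t *\<^sub>R e)) has_derivative (\<lambda>h. D (h *\<^sub>R e))) (at x)" by (simp add: o_def)
  moreover have "(\<lambda>h. D (h *\<^sub>R e)) = (\<lambda>h. h * D e)"
    using l by (auto simp: linear_scale)
  moreover have "(\<lambda>h. h * D e) = (*) (D e)" by (auto simp: mult.commute)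
  ultimately show ?thesis by (simp add: has_field_derivative_def)
qed

lemma pd_eq:
  assumes "(f has_derivative D) (at R)"
  shows "pd k f R = D (axis k 1)"
proof -
  have "((\<lambda>t. f (R + t *\<^sub>R axis k 1)) has_real_derivative D (axis k 1)) (at 0)"
    by (rule line_deriv) (use assms in simp)
  thus ?thesis unfolding pd_def by (rule DERIV_imp_deriv)
qed

lemma line_pd:
  fixes f :: "real^'n::finite \<Rightarrow> real"
  assumes "f differentiable (at (y0 + x *\<^sub>R axis k 1))"
  shows "((\<lambda>t. f (y0 + t *\<^sub>R axis k 1)) has_real_derivative pd k f (y0 + x *\<^sub>R axis k 1)) (at x)"
proof -
  obtain D where D: "(f has_derivative D) (at (y0 + x *\<^sub>R axis k 1))"
    using assms differentiable_def by blast
  show ?thesis using line_deriv[OF D] pd_eq[OF D] by simp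
qed

lemma pd_has:
  fixes f :: "real^'n::finite \<Rightarrow> real"
  assumes "f differentiable (at R)"
  shows "((\<lambda>t. f (R + t *\<^sub>R axis k 1)) has_real_derivative pd k f R) (at 0)"
  using line_pd[of f R 0 k] assms by simp

lemma pd_local:
  fixes f g :: "real^'n::finite \<Rightarrow> real"
  assumes "open V" "R \<in> V" "\<And>x. x \<in> V \<Longrightarrow> f x = g x"
  shows "pd k f R = pd k g R"
proof -
  have c: "continuous (at 0) (\<lambda>t::real. R + t *\<^sub>R axis k 1)"
    by (intro continuous_intros)
  have o: "open ((\<lambda>t::real. R + t *\<^sub>R axis k 1) -` V)"
    by (rule open_vimage[OF assms(1)]) (intro continuous_intros)
  have "eventually (\<lambda>t. R + t *\<^sub>R axis k 1 \<in> V) (nhds (0::real))"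
    unfolding eventually_nhds using o assms(2) by (intro exI[of _ "(\<lambda>t::real. R + t *\<^sub>R axis k 1) -` V"]) auto
  hence ev: "eventually (\<lambda>t. f (R + t *\<^sub>R axis k 1) = g (R + t *\<^sub>R axis k 1)) (nhds (0::real))"
    by (rule eventually_mono) (use assms(3) in auto)
  show ?thesis unfolding pd_def deriv_def
    using DERIV_cong_ev[OF refl ev refl] by simp
qed

lemma pd_unfold_diff:
  fixes f :: "real^'n::finite \<Rightarrow> real"
  assumes "f differentiable (at R)"
  shows "(f has_derivative (\<lambda>h. \<Sum>j\<in>UNIV. h$j * pd j f R)) (at R)"
proof -
  obtain D where D: "(f has_derivative D) (at R)" using assms differentiable_def by blast
  have l: "linear D" using D has_derivative_linear by blast
  have "D h = (\<Sum>j\<in>UNIV. h$j * pd j f R)" for h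
  proof -
    have "h = (\<Sum>j\<in>UNIV. h$j *\<^sub>R axis j 1)"
      by (simp add: vec_eq_iff axis_def if_distrib cong: if_cong)
    hence "D h = D (\<Sum>j\<in>UNIV. h$j *\<^sub>R axis j 1)" by simp
    also have "\<dots> = (\<Sum>j\<in>UNIV. h$j * D (axis j 1))"
      using l by (simp add: linear_sum linear_scale)
    finally show ?thesis using pd_eq[OF D] by simp
  qed
  thus ?thesis using D by (metis (no_types, lifting) ext)
qed



lemma box_mvt:
  fixes P Fi :: "real^'n::finite \<Rightarrow> real"
  assumes s: "s > 0"
    and box: "\<And>a b. 0 \<le> a \<Longrightarrow> a \<le> s \<Longrightarrow> 0 \<le> b \<Longrightarrow> b \<le> s \<Longrightarrow> R + a *\<^sub>R axis i 1 + b *\<^sub>R axis j 1 \<in> V"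
    and dP: "\<And>x. x \<in> V \<Longrightarrow> P differentiable (at x)"
    and pdP: "\<And>x. x \<in> V \<Longrightarrow> pd i P x = Fi x"
    and dF: "\<And>x. x \<in> V \<Longrightarrow> Fi differentiable (at x)"
  shows "\<exists>a b. 0 \<le> a \<and> a \<le> s \<and> 0 \<le> b \<and> b \<le> s \<and>
     P (R + s *\<^sub>R axis i 1 + s *\<^sub>R axis j 1) - P (R + s *\<^sub>R axis i 1) - P (R + s *\<^sub>R axis j 1) + P R
       = s^2 * pd j Fi (R + a *\<^sub>R axis i 1 + b *\<^sub>R axis j 1)"
proof -
  define ei where "ei = (axis i 1 :: real^'n)"
  define ej where "ej = (axis j 1 :: real^'n)"
  define g where "g x = P ((R + s *\<^sub>R ej) + x *\<^sub>R ei) - P (R + x *\<^sub>R ei)" for x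
  have "DERIV g x :> Fi ((R + s *\<^sub>R ej) + x *\<^sub>R ei) - Fi (R + x *\<^sub>R ei)" if "0 \<le> x" "x \<le> s" for x
  proof -
    have m1: "(R + s *\<^sub>R ej) + x *\<^sub>R ei \<in> V"
      using box[OF that s[THEN less_imp_le] order_refl] unfolding ei_def ej_def by (simp add: algebra_simps)
    have m2: "R + x *\<^sub>R ei \<in> V"
      using box[OF that order_refl s[THEN less_imp_le]] box[of x 0] that s unfolding ei_def ej_def by simp
    show ?thesis unfolding g_def
      using line_pd[OF dP[OF m1[unfolded ei_def]]] line_pd[OF dP[OF m2[unfolded ei_def]]]
        pdP[OF m1] pdP[OF m2] unfolding ei_def
      by (auto intro!: derivative_eq_intros)
  qed
  from MVT2[OF s this]
  obtain xi where xi: "0 < xi" "xi < s"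
    "g s - g 0 = (s - 0) * (Fi ((R + s *\<^sub>R ej) + xi *\<^sub>R ei) - Fi (R + xi *\<^sub>R ei))" by auto
  define h where "h y = Fi ((R + xi *\<^sub>R ei) + y *\<^sub>R ej)" for y
  have "DERIV h y :> pd j Fi ((R + xi *\<^sub>R ei) + y *\<^sub>R ej)" if "0 \<le> y" "y \<le> s" for y
  proof -
    have m: "(R + xi *\<^sub>R ei) + y *\<^sub>R ej \<in> V"
      using box[of xi y] xi that unfolding ei_def ej_def by simp
    show ?thesis unfolding h_def using line_pd[OF dF[OF m[unfolded ej_def]]] unfolding ej_def .
  qed
  from MVT2[OF s this]
  obtain eta where eta: "0 < eta" "eta < s"
    "h s - h 0 = (s - 0) * pd j Fi ((R + xi *\<^sub>R ei) + eta *\<^sub>R ej)" by auto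
  have "h s = Fi ((R + s *\<^sub>R ej) + xi *\<^sub>R ei)" "h 0 = Fi (R + xi *\<^sub>R ei)"
    unfolding h_def by (simp_all add: algebra_simps)
  hence "g s - g 0 = s^2 * pd j Fi ((R + xi *\<^sub>R ei) + eta *\<^sub>R ej)"
    using xi(3) eta(3) by (simp add: power2_eq_square)
  moreover have "g s - g 0 = P (R + s *\<^sub>R ei + s *\<^sub>R ej) - P (R + s *\<^sub>R ei) - P (R + s *\<^sub>R ej) + P R"
    unfolding g_def by (simp add: algebra_simps)
  ultimately show ?thesis using xi eta unfolding ei_def ej_def
    by (intro exI[of _ xi] exI[of _ eta]) auto
qed

lemma norm_box: "norm (a *\<^sub>R axis i (1::real) + b *\<^sub>R axis j 1 :: real^'n::finite) \<le> \<bar>a\<bar> + \<bar>b\<bar>"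
  by (rule order_trans[OF norm_triangle_ineq]) simp

lemma abs_lemma: "\<bar>(x::real) - a\<bar> < \<bar>a - b\<bar> / 2 \<Longrightarrow> \<bar>x - b\<bar> < \<bar>a - b\<bar> / 2 \<Longrightarrow> False"
  by (auto simp: abs_if split: if_splits)

lemma clairaut:
  fixes P Fi Fj :: "real^'n::finite \<Rightarrow> real"
  assumes V: "open V" "R \<in> V"
    and dP: "\<And>x. x \<in> V \<Longrightarrow> P differentiable (at x)"
    and pi: "\<And>x. x \<in> V \<Longrightarrow> pd i P x = Fi x"
    and pj: "\<And>x. x \<in> V \<Longrightarrow> pd j P x = Fj x"
    and dFi: "\<And>x. x \<in> V \<Longrightarrow> Fi differentiable (at x)"
    and dFj: "\<And>x. x \<in> V \<Longrightarrow> Fj differentiable (at x)"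
    and ci: "continuous (at R) (pd j Fi)"
    and cj: "continuous (at R) (pd i Fj)"
  shows "pd j Fi R = pd i Fj R"
proof (rule ccontr)
  assume ne: "pd j Fi R \<noteq> pd i Fj R"
  define d where "d = \<bar>pd j Fi R - pd i Fj R\<bar>"
  have d: "d > 0" using ne unfolding d_def by simp
  obtain d1 where d1: "d1 > 0" "\<And>y. dist y R < d1 \<Longrightarrow> dist (pd j Fi y) (pd j Fi R) < d/2"
    using ci d unfolding continuous_at_eps_delta by (metis half_gt_zero)
  obtain d2 where d2: "d2 > 0" "\<And>y. dist y R < d2 \<Longrightarrow> dist (pd i Fj y) (pd i Fj R) < d/2"
    using cj d unfolding continuous_at_eps_delta by (metis half_gt_zero)
  obtain d3 where d3: "d3 > 0" "ball R d3 \<subseteq> V" using V open_contains_ball by blast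
  define s where "s = min d1 (min d2 d3) / 3"
  have s: "s > 0" using d1 d2 d3 unfolding s_def by simp
  have near: "dist (R + a *\<^sub>R axis k 1 + b *\<^sub>R axis l 1) R < min d1 (min d2 d3)"
    if "0 \<le> a" "a \<le> s" "0 \<le> b" "b \<le> s" for a b k l
  proof -
    have "dist (R + a *\<^sub>R axis k 1 + b *\<^sub>R axis l 1) R = norm (a *\<^sub>R axis k (1::real) + b *\<^sub>R axis l 1 :: real^'n)"
      by (simp add: dist_norm algebra_simps)
    also have "\<dots> \<le> \<bar>a\<bar> + \<bar>b\<bar>" by (rule norm_box)
    also have "\<dots> \<le> 2 * s" using that by simp
    also have "\<dots> < min d1 (min d2 d3)" using s unfolding s_def by (simp only: field_simps)
    finally show ?thesis .
  qed
  have inV: "R + a *\<^sub>R axis k 1 + b *\<^sub>R axis l 1 \<in> V"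
    if "0 \<le> a" "a \<le> s" "0 \<le> b" "b \<le> s" for a b k l
    using near[OF that, of k l] d3(2) by (auto simp: dist_commute)
  obtain a1 b1 where ab1: "0 \<le> a1" "a1 \<le> s" "0 \<le> b1" "b1 \<le> s"
    "P (R + s *\<^sub>R axis i 1 + s *\<^sub>R axis j 1) - P (R + s *\<^sub>R axis i 1) - P (R + s *\<^sub>R axis j 1) + P R
       = s^2 * pd j Fi (R + a1 *\<^sub>R axis i 1 + b1 *\<^sub>R axis j 1)"
    using box_mvt[OF s inV dP pi dFi] by blast
  obtain a2 b2 where ab2: "0 \<le> a2" "a2 \<le> s" "0 \<le> b2" "b2 \<le> s"
    "P (R + s *\<^sub>R axis j 1 + s *\<^sub>R axis i 1) - P (R + s *\<^sub>R axis j 1) - P (R + s *\<^sub>R axis i 1) + P R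
       = s^2 * pd i Fj (R + a2 *\<^sub>R axis j 1 + b2 *\<^sub>R axis i 1)"
    using box_mvt[OF s inV dP pj dFj] by blast
  have "s^2 * pd j Fi (R + a1 *\<^sub>R axis i 1 + b1 *\<^sub>R axis j 1) = s^2 * pd i Fj (R + a2 *\<^sub>R axis j 1 + b2 *\<^sub>R axis i 1)"
    using ab1(5) ab2(5) by (simp add: algebra_simps)
  hence eq: "pd j Fi (R + a1 *\<^sub>R axis i 1 + b1 *\<^sub>R axis j 1) = pd i Fj (R + a2 *\<^sub>R axis j 1 + b2 *\<^sub>R axis i 1)"
    using s by simp
  have e1: "dist (pd j Fi (R + a1 *\<^sub>R axis i 1 + b1 *\<^sub>R axis j 1)) (pd j Fi R) < d/2"
    using d1(2) near[OF ab1(1-4), of i j] by simp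
  have e2: "dist (pd i Fj (R + a2 *\<^sub>R axis j 1 + b2 *\<^sub>R axis i 1)) (pd i Fj R) < d/2"
    using d2(2) near[OF ab2(1-4), of j i] by simp
  show False using e1 e2 eq unfolding d_def dist_real_def using abs_lemma by metis
qed



lemma poincare:
  fixes F :: "'n::finite \<Rightarrow> real^'n \<Rightarrow> real"
  assumes r: "r > 0"
    and dF: "\<And>m x. x \<in> ball R0 r \<Longrightarrow> F m differentiable (at x)"
    and cF: "\<And>m j. continuous_on (ball R0 r) (pd j (F m))"
    and cl: "\<And>m j x. x \<in> ball R0 r \<Longrightarrow> pd j (F m) x = pd m (F j) x"
  shows "\<exists>P. (\<forall>x\<in>ball R0 r. P differentiable (at x)) \<and> (\<forall>x\<in>ball R0 r. \<forall>k. pd k P x = F k x)"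
proof -
  define B where "B = ball R0 r"
  define \<gamma> where "\<gamma> x t = R0 + t *\<^sub>R (x - R0)" for x and t :: real
  define G where "G x t = (\<Sum>j\<in>UNIV. F j (\<gamma> x t) * (x - R0)$j)" for x t
  define a where "a m x t = F m (\<gamma> x t) + t * (\<Sum>j\<in>UNIV. (x - R0)$j * pd j (F m) (\<gamma> x t))" for m x t
  define fx where "fx x t = (\<Sum>m\<in>UNIV. a m x t *\<^sub>R blinfun_inner_left (axis m (1::real)))" for x t
  define P where "P x = integral (cbox 0 (1::real)) (G x)" for x
  have oB: "open B" and cB: "convex B" unfolding B_def by auto
  have gB: "\<gamma> x t \<in> B" if "x \<in> B" "t \<in> {0..1}" for x t
  proof -
    have "dist R0 (\<gamma> x t) = \<bar>t\<bar> * norm (x - R0)" unfolding \<gamma>_def by (simp add: dist_norm)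
    also have "\<dots> \<le> norm (x - R0)" using that by (simp add: mult_left_le_one_le)
    also have "\<dots> < r" using that unfolding B_def by (simp add: dist_norm norm_minus_commute)
    finally show ?thesis unfolding B_def by simp
  qed
  have contF: "continuous_on B (F m)" for m
    using dF unfolding B_def by (meson continuous_at_imp_continuous_on differentiable_imp_continuous_within)
  have contg: "continuous_on (B \<times> {0..1}) (\<lambda>(x,t). \<gamma> x t)"
    unfolding \<gamma>_def by (auto intro!: continuous_intros simp: split_beta)
  have gimg: "(\<lambda>(x,t). \<gamma> x t) ` (B \<times> {0..1}) \<subseteq> B" using gB by auto
  have conta: "continuous_on (B \<times> {0..1}) (\<lambda>(x,t). a m x t)" for m
  proof -
    have c1: "continuous_on (B \<times> {0..1}) (\<lambda>p. F m ((\<lambda>(x,t). \<gamma> x t) p))"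
      by (rule continuous_on_compose2[OF contF contg gimg])
    have c2: "continuous_on (B \<times> {0..1}) (\<lambda>p. pd j (F m) ((\<lambda>(x,t). \<gamma> x t) p))" for j
      by (rule continuous_on_compose2[OF cF[of j m, folded B_def] contg gimg])
    show ?thesis unfolding a_def split_beta
      using c1 c2 by (auto intro!: continuous_intros simp: split_beta)
  qed
  have contfx: "continuous_on (B \<times> {0..1}) (\<lambda>(x,t). fx x t)"
    unfolding fx_def split_beta using conta[unfolded split_beta]
    by (auto intro!: continuous_intros)
  have contfx': "continuous_on (B \<times> cbox 0 1) (\<lambda>(x,t). fx x t)" using contfx by simp
  have dG: "((\<lambda>x. G x t) has_derivative blinfun_apply (fx x t)) (at x within B)"
    if x: "x \<in> B" and t: "t \<in> cbox 0 1" for x t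
  proof -
    have t01: "t \<in> {0..1}" using t by simp
    have dFj: "((\<lambda>x. F j (\<gamma> x t)) has_derivative (\<lambda>h. t * (\<Sum>m\<in>UNIV. h$m * pd m (F j) (\<gamma> x t)))) (at x within B)" for j
    proof -
      have g: "((\<lambda>x. \<gamma> x t) has_derivative (\<lambda>h. t *\<^sub>R h)) (at x within B)"
        unfolding \<gamma>_def by (auto intro!: derivative_eq_intros)
      have f: "(F j has_derivative (\<lambda>h. \<Sum>m\<in>UNIV. h$m * pd m (F j) (\<gamma> x t))) (at (\<gamma> x t))"
        by (rule pd_unfold_diff) (use dF gB[OF x t01] in \<open>auto simp: B_def\<close>)
      show ?thesis using has_derivative_compose[OF g f]
        by (simp add: sum_distrib_left mult.assoc)
    qed
    have dc: "((\<lambda>x. (x - R0)$j) has_derivative (\<lambda>h. h$j)) (at x within B)" for j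
    proof -
      have "bounded_linear (\<lambda>h::real^'n. h$j)" by (rule bounded_linear_vec_nth)
      from bounded_linear.has_derivative[OF this has_derivative_diff[OF has_derivative_ident has_derivative_const]]
      show ?thesis by simp
    qed
    have "((\<lambda>x. G x t) has_derivative (\<lambda>h. \<Sum>j\<in>UNIV. t * (\<Sum>m\<in>UNIV. h$m * pd m (F j) (\<gamma> x t)) * (x - R0)$j + F j (\<gamma> x t) * h$j)) (at x within B)"
      unfolding G_def
      by (rule has_derivative_sum, rule has_derivative_eq_rhs[OF has_derivative_mult[OF dFj dc]]) (auto simp: algebra_simps)
    moreover have "(\<lambda>h. \<Sum>j\<in>UNIV. t * (\<Sum>m\<in>UNIV. h$m * pd m (F j) (\<gamma> x t)) * (x - R0)$j + F j (\<gamma> x t) * h$j) = blinfun_apply (fx x t)"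
    proof
      fix h :: "real^'n"
      have "(\<Sum>j\<in>UNIV. t * (\<Sum>m\<in>UNIV. h$m * pd m (F j) (\<gamma> x t)) * (x - R0)$j + F j (\<gamma> x t) * h$j)
          = (\<Sum>j\<in>UNIV. \<Sum>m\<in>UNIV. t * h$m * pd m (F j) (\<gamma> x t) * (x - R0)$j) + (\<Sum>j\<in>UNIV. F j (\<gamma> x t) * h$j)"
        by (simp add: sum.distrib sum_distrib_left sum_distrib_right algebra_simps)
      also have "(\<Sum>j\<in>UNIV. \<Sum>m\<in>UNIV. t * h$m * pd m (F j) (\<gamma> x t) * (x - R0)$j)
          = (\<Sum>m\<in>UNIV. \<Sum>j\<in>UNIV. t * h$m * pd j (F m) (\<gamma> x t) * (x - R0)$j)"
        using cl[of "\<gamma> x t"] gB[OF x t01] unfolding B_def by (subst sum.swap) simp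
      also have "\<dots> + (\<Sum>j\<in>UNIV. F j (\<gamma> x t) * h$j) = (\<Sum>m\<in>UNIV. a m x t * h$m)"
        unfolding a_def by (simp add: sum.distrib sum_distrib_left sum_distrib_right algebra_simps)
      also have "\<dots> = blinfun_apply (fx x t) h"
        unfolding fx_def by (simp add: blinfun.sum_left blinfun.scaleR_left inner_axis)
      finally show "(\<Sum>j\<in>UNIV. t * (\<Sum>m\<in>UNIV. h$m * pd m (F j) (\<gamma> x t)) * (x - R0)$j + F j (\<gamma> x t) * h$j) = blinfun_apply (fx x t) h" .
    qed
    ultimately show ?thesis by simp
  qed
  have intG: "G x integrable_on cbox 0 1" if x: "x \<in> B" for x
  proof -
    have cg: "continuous_on {0..1} (\<gamma> x)" unfolding \<gamma>_def by (intro continuous_intros)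
    have "continuous_on {0..1} (\<lambda>t. F j (\<gamma> x t))" for j
      by (rule continuous_on_compose2[OF contF cg]) (use gB x in auto)
    hence "continuous_on {0..1} (G x)" unfolding G_def by (auto intro!: continuous_intros)
    thus ?thesis by (simp add: integrable_continuous_interval)
  qed
  have main: "P differentiable (at x0) \<and> (\<forall>k. pd k P x0 = F k x0)" if x0: "x0 \<in> B" for x0
  proof -
    have L: "(P has_derivative blinfun_apply (integral (cbox 0 1) (fx x0))) (at x0 within B)"
      unfolding P_def by (rule leibniz_rule[OF dG intG contfx' x0 cB])
    hence L': "(P has_derivative blinfun_apply (integral (cbox 0 1) (fx x0))) (at x0)"
      using at_within_open[OF x0 oB] by simp
    have cfx0: "continuous_on {0..1} (fx x0)"
      by (rule continuous_on_compose2[OF contfx, of _ "\<lambda>t. (x0, t)", simplified]) (use x0 in \<open>auto intro!: continuous_intros\<close>)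
    have ifx: "fx x0 integrable_on cbox 0 1" using cfx0 by (simp add: integrable_continuous_interval)
    have "pd k P x0 = F k x0" for k
    proof -
      have "pd k P x0 = integral (cbox 0 1) (\<lambda>t. blinfun_apply (fx x0 t) (axis k 1))"
        using pd_eq[OF L'] blinfun_apply_integral[OF ifx] by simp
      also have "\<dots> = integral {0..1} (a k x0)"
      proof -
        have "blinfun_apply (fx x0 t) (axis k 1) = a k x0 t" for t
          unfolding fx_def by (simp add: blinfun.sum_left blinfun.scaleR_left inner_axis_axis if_distrib cong: if_cong)
        thus ?thesis by simp
      qed
      also have "\<dots> = F k x0"
      proof -
        define \<phi> where "\<phi> t = t * F k (\<gamma> x0 t)" for t
        have "(\<phi> has_vector_derivative a k x0 t) (at t within {0..1})" if t: "t \<in> {0..1}" for t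
        proof -
          have g: "((\<gamma> x0) has_derivative (\<lambda>h. h *\<^sub>R (x0 - R0))) (at t within {0..1})"
            unfolding \<gamma>_def by (auto intro!: derivative_eq_intros)
          have f: "(F k has_derivative (\<lambda>h. \<Sum>j\<in>UNIV. h$j * pd j (F k) (\<gamma> x0 t))) (at (\<gamma> x0 t))"
            by (rule pd_unfold_diff) (use dF gB[OF x0 t] in \<open>auto simp: B_def\<close>)
          have "((\<lambda>t. F k (\<gamma> x0 t)) has_derivative (\<lambda>h. \<Sum>j\<in>UNIV. (h *\<^sub>R (x0 - R0))$j * pd j (F k) (\<gamma> x0 t))) (at t within {0..1})"
            using has_derivative_compose[OF g f] by (simp add: o_def)
          hence "((\<lambda>t. F k (\<gamma> x0 t)) has_real_derivative (\<Sum>j\<in>UNIV. (x0 - R0)$j * pd j (F k) (\<gamma> x0 t))) (at t within {0..1})"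
            unfolding has_field_derivative_def
            by (rule has_derivative_eq_rhs) (auto simp: fun_eq_iff sum_distrib_left algebra_simps)
          hence "(\<phi> has_real_derivative a k x0 t) (at t within {0..1})"
            unfolding \<phi>_def a_def by (auto intro!: derivative_eq_intros)
          thus ?thesis by (simp add: has_real_derivative_iff_has_vector_derivative)
        qed
        from fundamental_theorem_of_calculus[OF _ this]
        have "(a k x0 has_integral (\<phi> 1 - \<phi> 0)) {0..1}" by simp
        moreover have "\<phi> 1 - \<phi> 0 = F k x0" unfolding \<phi>_def \<gamma>_def by simp
        ultimately show ?thesis by (simp add: integral_unique)
      qed
      finally show ?thesis .
    qed
    thus ?thesis using L' differentiableI by blast
  qed
  show ?thesis using main unfolding B_def by blast
qed



lemma jet_simps[simp]: "jv (a,b,c) = a" "jd1 (a,b,c) = b" "jd2 (a,b,c) = c"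
  by (simp_all add: jv_def jd1_def jd2_def)

lemma dd2_Lag: "dd2 a k l (Lag c i j) R J = 0"
  unfolding dd2_def Lag_def by simp

lemma Lag_K: "Lag c i j R = (\<lambda>J. jd1 J (Some j) i * jd1 J None j - jd1 J (Some i) j * jd1 J None i
     + (jv J (Some j) - jv J (Some i))^2 * (1 / (c j (R$j) - c i (R$i))) * jd1 J None i * jd1 J None j)"
  unfolding Lag_def by (auto simp: fun_eq_iff)

lemma dd1_Lag:
  assumes "i \<noteq> j"
  shows "dd1 a k (Lag c i j) R J =
 (if a = Some j \<and> k = i then jd1 J None j else 0)
 + (if a = None \<and> k = j then jd1 J (Some j) i + (jv J (Some j) - jv J (Some i))^2 / (c j (R$j) - c i (R$i)) * jd1 J None i else 0)
 - (if a = Some i \<and> k = j then jd1 J None i else 0)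
 + (if a = None \<and> k = i then - jd1 J (Some i) j + (jv J (Some j) - jv J (Some i))^2 / (c j (R$j) - c i (R$i)) * jd1 J None j else 0)"
proof -
  define K where "K = 1 / (c j (R$j) - c i (R$i))"
  have e: "(x::real) / (c j (R$j) - c i (R$i)) = x * K" for x unfolding K_def by simp
  show ?thesis
  unfolding dd1_def Lag_K K_def[symmetric] e using assms
  by (cases a; (cases "k=i"; cases "k=j"); (cases "the a = i"; cases "the a = j"); 
      auto intro!: DERIV_imp_deriv derivative_eq_intros)
qed

lemma dval_Lag:
  assumes "i \<noteq> j"
  shows "dval a (Lag c i j) R J =
 (if a = Some j then 2 * (jv J (Some j) - jv J (Some i)) / (c j (R$j) - c i (R$i)) * jd1 J None i * jd1 J None j else 0)
 - (if a = Some i then 2 * (jv J (Some j) - jv J (Some i)) / (c j (R$j) - c i (R$i)) * jd1 J None i * jd1 J None j else 0)"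
proof -
  define K where "K = 1 / (c j (R$j) - c i (R$i))"
  have e: "(x::real) / (c j (R$j) - c i (R$i)) = x * K" for x unfolding K_def by simp
  show ?thesis
  unfolding dval_def Lag_K K_def[symmetric] e using assms
  by (cases a; (cases "the a = i"; cases "the a = j"); 
      auto intro!: DERIV_imp_deriv derivative_eq_intros; simp add: algebra_simps)
qed



lemma pd_const[simp]: "pd k (\<lambda>x. a) R = 0"
  unfolding pd_def by simp

lemma pd_rule:
  fixes f :: "real^'n::finite \<Rightarrow> real"
  assumes "((\<lambda>t. f (R + t *\<^sub>R axis k 1)) has_real_derivative D) (at 0)"
  shows "pd k f R = D"
  unfolding pd_def using assms by (rule DERIV_imp_deriv)

lemma pd_minus:
  fixes f :: "real^'n::finite \<Rightarrow> real"
  assumes "f differentiable (at R)"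
  shows "pd k (\<lambda>x. - f x) R = - pd k f R"
  by (rule pd_rule) (use pd_has[OF assms] in \<open>auto intro!: derivative_eq_intros\<close>)

lemma pd_add:
  fixes f g :: "real^'n::finite \<Rightarrow> real"
  assumes "f differentiable (at R)" "g differentiable (at R)"
  shows "pd k (\<lambda>x. f x + g x) R = pd k f R + pd k g R"
  by (rule pd_rule) (use pd_has[OF assms(1)] pd_has[OF assms(2)] in \<open>auto intro!: derivative_eq_intros\<close>)

lemma pd_diff:
  fixes f g :: "real^'n::finite \<Rightarrow> real"
  assumes "f differentiable (at R)" "g differentiable (at R)"
  shows "pd k (\<lambda>x. f x - g x) R = pd k f R - pd k g R"
  by (rule pd_rule) (use pd_has[OF assms(1)] pd_has[OF assms(2)] in \<open>auto intro!: derivative_eq_intros\<close>)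

lemma pd_mult:
  fixes f g :: "real^'n::finite \<Rightarrow> real"
  assumes "f differentiable (at R)" "g differentiable (at R)"
  shows "pd k (\<lambda>x. f x * g x) R = pd k f R * g R + f R * pd k g R"
  by (rule pd_rule) (use pd_has[OF assms(1)] pd_has[OF assms(2)] in \<open>auto intro!: derivative_eq_intros\<close>)

lemma pd_inverse:
  fixes f :: "real^'n::finite \<Rightarrow> real"
  assumes "f differentiable (at R)" "f R \<noteq> 0"
  shows "pd k (\<lambda>x. inverse (f x)) R = - (pd k f R * inverse (f R) * inverse (f R))"
  by (rule pd_rule) (use pd_has[OF assms(1)] assms(2) in \<open>auto intro!: derivative_eq_intros simp: power2_eq_square\<close>)

inductive_set Alg :: "(real^'n::finite) set \<Rightarrow> (real^'n \<Rightarrow> real) set" for U where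
  base: "smooth_on U f \<Longrightarrow> f \<in> Alg U"
| const: "(\<lambda>x. a) \<in> Alg U"
| add: "f \<in> Alg U \<Longrightarrow> g \<in> Alg U \<Longrightarrow> (\<lambda>x. f x + g x) \<in> Alg U"
| diff: "f \<in> Alg U \<Longrightarrow> g \<in> Alg U \<Longrightarrow> (\<lambda>x. f x - g x) \<in> Alg U"
| mult: "f \<in> Alg U \<Longrightarrow> g \<in> Alg U \<Longrightarrow> (\<lambda>x. f x * g x) \<in> Alg U"
| inv: "f \<in> Alg U \<Longrightarrow> (\<forall>x\<in>U. f x \<noteq> 0) \<Longrightarrow> (\<lambda>x. inverse (f x)) \<in> Alg U"

lemma smooth_diffble: "smooth_on U f \<Longrightarrow> R \<in> U \<Longrightarrow> f differentiable (at R)"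
  unfolding smooth_on_def by (metis foldr_Nil id_apply)

lemma smooth_pd: "smooth_on U f \<Longrightarrow> smooth_on U (pd k f)"
  unfolding smooth_on_def
proof (intro allI ballI)
  fix ks R assume "\<forall>ks. \<forall>R\<in>U. foldr pd ks f differentiable at R" "R \<in> U"
  hence "foldr pd (ks @ [k]) f differentiable at R" by blast
  thus "foldr pd ks (pd k f) differentiable at R" by simp
qed

lemma Alg_closed:
  assumes "open U" "f \<in> Alg U"
  shows "(\<forall>R\<in>U. f differentiable (at R)) \<and> (\<forall>k. \<exists>g\<in>Alg U. \<forall>R\<in>U. pd k f R = g R)"
  using assms(2)
proof induction
  case (base f)
  then show ?case using smooth_diffble smooth_pd Alg.base by blast
next
  case (const a)
  show ?case using Alg.const[of 0 U] by auto
next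
  case (add f g)
  show ?case
  proof (intro conjI allI ballI)
    fix R assume "R \<in> U" thus "(\<lambda>x. f x + g x) differentiable at R" using add by auto
  next
    fix k
    obtain g1 where "g1 \<in> Alg U" "\<forall>R\<in>U. pd k f R = g1 R" using add by blast
    moreover obtain g2 where "g2 \<in> Alg U" "\<forall>R\<in>U. pd k g R = g2 R" using add by blast
    ultimately show "\<exists>h\<in>Alg U. \<forall>R\<in>U. pd k (\<lambda>x. f x + g x) R = h R"
      using add by (intro bexI[of _ "\<lambda>x. g1 x + g2 x"]) (auto simp: pd_add intro: Alg.add)
  qed
next
  case (diff f g)
  show ?case
  proof (intro conjI allI ballI)
    fix R assume "R \<in> U" thus "(\<lambda>x. f x - g x) differentiable at R" using diff by auto
  next
    fix k
    obtain g1 where "g1 \<in> Alg U" "\<forall>R\<in>U. pd k f R = g1 R" using diff by blast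
    moreover obtain g2 where "g2 \<in> Alg U" "\<forall>R\<in>U. pd k g R = g2 R" using diff by blast
    ultimately show "\<exists>h\<in>Alg U. \<forall>R\<in>U. pd k (\<lambda>x. f x - g x) R = h R"
      using diff by (intro bexI[of _ "\<lambda>x. g1 x - g2 x"]) (auto simp: pd_diff intro: Alg.diff)
  qed
next
  case (mult f g)
  show ?case
  proof (intro conjI allI ballI)
    fix R assume "R \<in> U" thus "(\<lambda>x. f x * g x) differentiable at R" using mult by auto
  next
    fix k
    obtain g1 where "g1 \<in> Alg U" "\<forall>R\<in>U. pd k f R = g1 R" using mult by blast
    moreover obtain g2 where "g2 \<in> Alg U" "\<forall>R\<in>U. pd k g R = g2 R" using mult by blast
    ultimately show "\<exists>h\<in>Alg U. \<forall>R\<in>U. pd k (\<lambda>x. f x * g x) R = h R"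
      using mult by (intro bexI[of _ "\<lambda>x. g1 x * g x + f x * g2 x"]) (auto simp: pd_mult intro: Alg.add Alg.mult)
  qed
next
  case (inv f)
  show ?case
  proof (intro conjI allI ballI)
    fix R assume "R \<in> U" thus "(\<lambda>x. inverse (f x)) differentiable at R" using inv
      by (auto intro!: derivative_intros)
  next
    fix k
    obtain g1 where "g1 \<in> Alg U" "\<forall>R\<in>U. pd k f R = g1 R" using inv by blast
    moreover have ii: "(\<lambda>x. inverse (f x)) \<in> Alg U" using inv by (auto intro: Alg.inv)
    ultimately have m: "(\<lambda>x. (0 - 1) * (g1 x * inverse (f x) * inverse (f x))) \<in> Alg U"
      by (intro Alg.mult Alg.const) assumption+
    show "\<exists>h\<in>Alg U. \<forall>R\<in>U. pd k (\<lambda>x. inverse (f x)) R = h R"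
      apply (rule bexI[OF _ m])
      using inv \<open>\<forall>R\<in>U. pd k f R = g1 R\<close> by (auto simp: pd_inverse)
  qed
qed

lemma Alg_smooth:
  assumes "open U" "f \<in> Alg U"
  shows "smooth_on U f"
proof -
  have ex: "\<exists>g\<in>Alg U. \<forall>R\<in>U. foldr pd ks f R = g R" for ks
  proof (induction ks)
    case Nil then show ?case using assms by auto
  next
    case (Cons k ks)
    then obtain g where g: "g \<in> Alg U" "\<forall>R\<in>U. foldr pd ks f R = g R" by blast
    obtain g' where g': "g' \<in> Alg U" "\<forall>R\<in>U. pd k g R = g' R" using Alg_closed[OF assms(1) g(1)] by blast
    have "\<forall>R\<in>U. foldr pd (k#ks) f R = g' R"
      using pd_local[OF assms(1) _ , of _ "foldr pd ks f" g k] g g' by simp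
    then show ?case using g' by blast
  qed
  show ?thesis unfolding smooth_on_def
  proof (intro allI ballI)
    fix ks R assume R: "R \<in> U"
    obtain g where g: "g \<in> Alg U" "\<forall>R\<in>U. foldr pd ks f R = g R" using ex by blast
    have "g differentiable at R" using Alg_closed[OF assms(1) g(1)] R by blast
    then obtain D where "(g has_derivative D) (at R)" unfolding differentiable_def by blast
    hence "(foldr pd ks f has_derivative D) (at R)"
      by (rule has_derivative_transform_within_open[OF _ assms(1) R]) (use g in auto)
    thus "foldr pd ks f differentiable at R" unfolding differentiable_def by blast
  qed
qed



lemma sq_div: "((x::real) - y)^2 / (a - b) = - ((y - x)^2 / (b - a))"
proof -
  have "- ((y - x)^2 / (b - a)) = - ((x - y)^2 / (- (a - b)))" by (simp add: power2_commute)
  also have "\<dots> = (x - y)^2 / (a - b)" by (simp only: divide_minus_right minus_minus)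
  finally show ?thesis by simp
qed

lemma ev_dd1:
  assumes "i \<noteq> j"
  shows "ev (flds u mu) (dd1 a k (Lag c i j)) = (\<lambda>R. (if a = Some j \<and> k = i then pd j u R else 0)
     + (if a = None \<and> k = j then Pf c u mu j i R else 0) - (if a = Some i \<and> k = j then pd i u R else 0)
     - (if a = None \<and> k = i then Pf c u mu i j R else 0))"
  using assms
  by (auto simp: fun_eq_iff ev_def jetw_def dd1_Lag flds_def Pf_def sq_div[of "mu j _" "mu i _"])

lemma ev_dval:
  assumes "i \<noteq> j"
  shows "ev (flds u mu) (dval a (Lag c i j)) R =
    (if a = Some j then 2 * (mu j R - mu i R) / (c j (R$j) - c i (R$i)) * pd i u R * pd j u R else 0)
  - (if a = Some i then 2 * (mu j R - mu i R) / (c j (R$j) - c i (R$i)) * pd i u R * pd j u R else 0)"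
  using assms by (simp add: ev_def jetw_def dval_Lag flds_def)

lemma ev_dd2: "ev w (dd2 a k l (Lag c i j)) = (\<lambda>R. 0)"
  by (simp add: fun_eq_iff ev_def dd2_Lag)

lemma pd_const_fun: "pd k (\<lambda>x. a) = (\<lambda>R. 0)"
  by (simp add: fun_eq_iff)

lemma var0_form:
  assumes "i \<noteq> j" "Pf c u mu i j differentiable (at R)" "pd i u differentiable (at R)"
  shows "var0 (Lag c) i j (flds u mu) a R =
    (if a = Some j then 2 * (mu j R - mu i R) / (c j (R$j) - c i (R$i)) * pd i u R * pd j u R - pd i (pd j u) R else 0)
  + (if a = Some i then pd j (pd i u) R - 2 * (mu j R - mu i R) / (c j (R$j) - c i (R$i)) * pd i u R * pd j u R else 0)
  + (if a = None then pd i (Pf c u mu i j) R - pd j (Pf c u mu j i) R else 0)"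
proof -
  have m1: "pd i (\<lambda>R. - Pf c u mu i j R) R = - pd i (Pf c u mu i j) R" by (rule pd_minus[OF assms(2)])
  have m2: "pd j (\<lambda>R. - pd i u R) R = - pd j (pd i u) R" by (rule pd_minus[OF assms(3)])
  note defs = var0_def ev_dd2 pd_const_fun ev_dval[OF assms(1)] ev_dd1[OF assms(1)]
  show ?thesis
  proof (cases a)
    case None thus ?thesis unfolding defs using assms(1) m1 by simp
  next
    case (Some m)
    show ?thesis
    proof (cases "m = j")
      case True thus ?thesis unfolding defs using assms(1) Some by simp
    next
      case False
      show ?thesis
      proof (cases "m = i")
        case True thus ?thesis unfolding defs using assms(1) Some m2 by simp
      next
        case False2: False
        thus ?thesis unfolding defs using Some False by simp
      qed
    qed
  qed
qed

lemma varj_form: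
  assumes "i \<noteq> j"
  shows "varj (Lag c) i j (flds u mu) a R = (if a = None then Pf c u mu j i R else 0) - (if a = Some i then pd i u R else 0)"
  unfolding varj_def ev_dd2 ev_dd1[OF assms] using assms by auto

lemma vark_form:
  assumes "i \<noteq> j" "i \<noteq> k" "j \<noteq> k"
  shows "vark (Lag c) i j k (flds u mu) a R = 0"
  unfolding vark_def ev_dd2 ev_dd1[OF assms(1)] using assms by auto

lemma ev_dd2': "ev w (dd2 a k l (Lag c i j)) R = 0"
  by (simp add: ev_def dd2_Lag)

lemma EL_iff:
  assumes dPf: "\<And>i j. i \<noteq> j \<Longrightarrow> Pf c u mu i j differentiable (at R)"
    and du: "\<And>i. pd i u differentiable (at R)"
  shows "multiform_EL (Lag c) (flds u mu) R \<longleftrightarrow>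
    (\<forall>i j k. i \<noteq> j \<and> j \<noteq> k \<and> i \<noteq> k \<longrightarrow>
       pd i (Pf c u mu i j) R = pd j (Pf c u mu j i) R \<and> Pf c u mu j i R = Pf c u mu k i R
     \<and> pd i (pd j u) R = 2 * (mu j R - mu i R) / (c j (R$j) - c i (R$i)) * pd i u R * pd j u R
     \<and> pd j (pd i u) R = 2 * (mu j R - mu i R) / (c j (R$j) - c i (R$i)) * pd i u R * pd j u R)"
    (is "?L \<longleftrightarrow> (\<forall>i j k. ?d i j k \<longrightarrow> ?C i j k)")
proof -
  have "?L \<longleftrightarrow> (\<forall>a i j k. ?d i j k \<longrightarrow> var0 (Lag c) i j (flds u mu) a R = 0 \<and>
      varj (Lag c) i j (flds u mu) a R - varj (Lag c) i k (flds u mu) a R = 0)" (is "_ \<longleftrightarrow> ?M")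
  proof
    assume L: ?L
    show ?M
    proof (intro allI impI)
      fix a i j k assume d: "?d i j k"
      have "var0 (Lag c) i j (flds u mu) a R = 0 \<and>
        varj (Lag c) i j (flds u mu) a R - varj (Lag c) i k (flds u mu) a R = 0 \<and> True"
        using L[unfolded multiform_EL_def, rule_format, OF d, where a=a] by blast
      thus "var0 (Lag c) i j (flds u mu) a R = 0 \<and>
        varj (Lag c) i j (flds u mu) a R - varj (Lag c) i k (flds u mu) a R = 0" by simp
    qed
  next
    assume M: ?M
    show ?L unfolding multiform_EL_def
    proof (intro allI impI)
      fix a i j k assume d: "?d i j k"
      have ij: "i \<noteq> j" and ik: "i \<noteq> k" and jk: "j \<noteq> k" using d by simp_all
      have h: "var0 (Lag c) i j (flds u mu) a R = 0 \<and>
        varj (Lag c) i j (flds u mu) a R - varj (Lag c) i k (flds u mu) a R = 0"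
        using M d by blast
      show "var0 (Lag c) i j (flds u mu) a R = 0 \<and>
         varj (Lag c) i j (flds u mu) a R - varj (Lag c) i k (flds u mu) a R = 0 \<and>
         ev (flds u mu) (dd2 a i j (Lag c i j)) R + ev (flds u mu) (dd2 a j k (Lag c j k)) R +
         ev (flds u mu) (dd2 a k i (Lag c k i)) R = 0 \<and>
         vark (Lag c) i j k (flds u mu) a R = 0 \<and>
         (\<forall>l. l \<noteq> i \<and> l \<noteq> j \<longrightarrow> ev (flds u mu) (dd2 a k l (Lag c i j)) R = 0) \<and>
         (\<forall>l. l \<noteq> i \<longrightarrow> ev (flds u mu) (dd2 a j l (Lag c i j)) R - ev (flds u mu) (dd2 a k l (Lag c i k)) R = 0)"
        using h by (simp only: ev_dd2' vark_form[OF ij ik jk] add_0 diff_self simp_thms)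
    qed
  qed
  also have "\<dots> \<longleftrightarrow> (\<forall>i j k. ?d i j k \<longrightarrow> ?C i j k)"
  proof (intro iffI allI impI)
    fix i j k assume H: ?M and d: "?d i j k"
    have ij: "i \<noteq> j" and ik: "i \<noteq> k" using d by simp_all
    have h1: "var0 (Lag c) i j (flds u mu) a R = 0" for a using H d by blast
    have h2: "varj (Lag c) i j (flds u mu) None R - varj (Lag c) i k (flds u mu) None R = 0" using H d by blast
    note V = var0_form[OF ij dPf[OF ij] du]
    have c1: "pd i (Pf c u mu i j) R = pd j (Pf c u mu j i) R" using h1[of None] unfolding V by simp
    have c2: "Pf c u mu j i R = Pf c u mu k i R" using h2 unfolding varj_form[OF ij] varj_form[OF ik] by simp
    have c3: "pd i (pd j u) R = 2 * (mu j R - mu i R) / (c j (R$j) - c i (R$i)) * pd i u R * pd j u R"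
      using h1[of "Some j"] ij unfolding V by simp
    have c4: "pd j (pd i u) R = 2 * (mu j R - mu i R) / (c j (R$j) - c i (R$i)) * pd i u R * pd j u R"
      using h1[of "Some i"] ij unfolding V by simp
    show "?C i j k" using c1 c2 c3 c4 by (intro conjI)
  next
    fix a i j k assume H: "\<forall>i j k. ?d i j k \<longrightarrow> ?C i j k" and d: "?d i j k"
    have C: "?C i j k" using H d by blast
    have ij: "i \<noteq> j" and ik: "i \<noteq> k" using d by simp_all
    note V = var0_form[OF ij dPf[OF ij] du]
    have v0: "var0 (Lag c) i j (flds u mu) a R = 0"
    proof (cases a)
      case None thus ?thesis unfolding V using C by simp
    next
      case (Some m)
      show ?thesis
      proof (cases "m = j")
        case True thus ?thesis unfolding V using C Some ij by simp
      next
        case False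
        show ?thesis
        proof (cases "m = i")
          case True thus ?thesis unfolding V using C Some ij by simp
        next
          case False2: False
          thus ?thesis unfolding V using Some False by simp
        qed
      qed
    qed
    have v1: "varj (Lag c) i j (flds u mu) a R - varj (Lag c) i k (flds u mu) a R = 0"
      unfolding varj_form[OF ij] varj_form[OF ik] using C by simp
    show "var0 (Lag c) i j (flds u mu) a R = 0 \<and>
      varj (Lag c) i j (flds u mu) a R - varj (Lag c) i k (flds u mu) a R = 0" using v0 v1 by (intro conjI)
  qed
  finally show ?thesis .
qed



theorem mainTheorem10:
  fixes c :: "'n::finite \<Rightarrow> real \<Rightarrow> real"
    and u :: "real^'n \<Rightarrow> real"
    and mu :: "'n \<Rightarrow> real^'n \<Rightarrow> real"
    and U :: "(real^'n) set"
  assumes n3: "CARD('n) \<ge> 3"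
    and U_open: "open U"
    and c_smooth: "\<And>i. smooth_on U (\<lambda>R. c i (R$i))"
    and c_distinct: "\<And>i j R. i \<noteq> j \<Longrightarrow> R \<in> U \<Longrightarrow> c i (R$i) \<noteq> c j (R$j)"
    and u_smooth: "smooth_on U u"
    and mu_smooth: "\<And>i. smooth_on U (mu i)"
  shows
    "((\<forall>R\<in>U. multiform_EL (Lag c) (flds u mu) R)
      \<longleftrightarrow>
       ((\<forall>R\<in>U. \<forall>i k j. i \<noteq> j \<and> k \<noteq> j \<longrightarrow> Pf c u mu i j R = Pf c u mu k j R)
      \<and> (\<forall>R\<in>U. \<forall>i j k l. i \<noteq> j \<and> k \<noteq> i \<and> l \<noteq> j \<longrightarrow>
             pd j (Pf c u mu k i) R = pd i (Pf c u mu l j) R)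
      \<and> (\<forall>R\<in>U. \<forall>i j. i \<noteq> j \<longrightarrow>
             pd i (pd j u) R = 2 * (mu j R - mu i R) / (c j (R$j) - c i (R$i)) * pd i u R * pd j u R)))
   \<and> ((\<forall>R\<in>U. multiform_EL (Lag c) (flds u mu) R)
      \<longleftrightarrow>
       (\<forall>R0\<in>U. \<exists>V P. open V \<and> R0 \<in> V \<and> V \<subseteq> U \<and> (\<forall>R\<in>V. P differentiable (at R)) \<and>
          (\<forall>R\<in>V. \<forall>i j. i \<noteq> j \<longrightarrow>
             pd j (mu i) R = (mu j R - mu i R)^2 / (c j (R$j) - c i (R$i)) * pd j u R + pd j P R
           \<and> pd i (pd j u) R = 2 * (mu j R - mu i R) / (c j (R$j) - c i (R$i)) * pd i u R * pd j u R)))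
   \<and> (\<forall>V P. open V \<longrightarrow> V \<subseteq> U \<longrightarrow> (\<forall>R\<in>V. P differentiable (at R)) \<longrightarrow>
       ((\<forall>R\<in>V. \<forall>i j. i \<noteq> j \<longrightarrow>
             pd j (mu i) R = (mu j R - mu i R)^2 / (c j (R$j) - c i (R$i)) * pd j u R + pd j P R
           \<and> pd i (pd j u) R = 2 * (mu j R - mu i R) / (c j (R$j) - c i (R$i)) * pd i u R * pd j u R)
        \<longleftrightarrow>
        (\<forall>R\<in>V. \<forall>i j. i \<noteq> j \<longrightarrow>
             pd j (\<lambda>x. mu i x - P x) R
               = ((mu j R - P R) - (mu i R - P R))^2 / (c j (R$j) - c i (R$i)) * pd j u R
           \<and> pd i (pd j u) R
               = 2 * ((mu j R - P R) - (mu i R - P R)) / (c j (R$j) - c i (R$i)) * pd i u R * pd j u R)))"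
proof -
  have third: "\<exists>k. k \<noteq> i \<and> k \<noteq> j" for i j :: 'n
  proof (rule ccontr)
    assume "\<not> (\<exists>k. k \<noteq> i \<and> k \<noteq> j)"
    hence "UNIV \<subseteq> {i, j}" by auto
    hence "CARD('n) \<le> card {i, j}" by (simp add: card_mono)
    also have "\<dots> \<le> 2" by (simp add: card_insert_if)
    finally show False using n3 by simp
  qed
  have Pf_Alg: "Pf c u mu i j \<in> Alg U" if ij: "i \<noteq> j" for i j
  proof -
    have s1: "smooth_on U (mu i)" by (rule mu_smooth)
    have s2: "smooth_on U (pd j (mu i))" using s1 by (rule smooth_pd)
    have a1: "pd j (mu i) \<in> Alg U" using s2 by (rule Alg.base)
    have a2: "mu i \<in> Alg U" "mu j \<in> Alg U" using Alg.base[OF mu_smooth[of i]] Alg.base[OF mu_smooth[of j]] .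
    have a4: "(\<lambda>R. c i (R$i)) \<in> Alg U" "(\<lambda>R. c j (R$j)) \<in> Alg U"
      using Alg.base[OF c_smooth[of i]] Alg.base[OF c_smooth[of j]] .
    have a6: "pd j u \<in> Alg U" using Alg.base[OF smooth_pd[OF u_smooth]] .
    have nz: "\<forall>x\<in>U. c i (x$i) - c j (x$j) \<noteq> 0"
    proof
      fix x assume "x \<in> U"
      from c_distinct[OF ij this] show "c i (x$i) - c j (x$j) \<noteq> 0" by simp
    qed
    have d1: "(\<lambda>x. mu i x - mu j x) \<in> Alg U" by (rule Alg.diff[OF a2])
    have d2: "(\<lambda>x. c i (x$i) - c j (x$j)) \<in> Alg U" by (rule Alg.diff[OF a4])
    have m1: "(\<lambda>x. (mu i x - mu j x) * (mu i x - mu j x)) \<in> Alg U" by (rule Alg.mult[OF d1 d1])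
    have m2: "(\<lambda>x. inverse (c i (x$i) - c j (x$j))) \<in> Alg U" by (rule Alg.inv[OF d2 nz])
    have m3: "(\<lambda>x. (mu i x - mu j x) * (mu i x - mu j x) * inverse (c i (x$i) - c j (x$j))) \<in> Alg U"
      by (rule Alg.mult[OF m1 m2])
    have m4: "(\<lambda>x. (mu i x - mu j x) * (mu i x - mu j x) * inverse (c i (x$i) - c j (x$j)) * pd j u x) \<in> Alg U"
      by (rule Alg.mult[OF m3 a6])
    have m5: "(\<lambda>R. pd j (mu i) R + (mu i R - mu j R) * (mu i R - mu j R) * inverse (c i (R$i) - c j (R$j)) * pd j u R) \<in> Alg U"
      by (rule Alg.add[OF a1 m4])
    have e: "Pf c u mu i j = (\<lambda>R. pd j (mu i) R + (mu i R - mu j R) * (mu i R - mu j R) * inverse (c i (R$i) - c j (R$j)) * pd j u R)"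
      by (rule ext) (simp only: Pf_def power2_eq_square divide_inverse)
    show ?thesis unfolding e by (rule m5)
  qed
  have Pf_sm: "smooth_on U (Pf c u mu i j)" if "i \<noteq> j" for i j
    using Alg_smooth[OF U_open Pf_Alg[OF that]] .
  have dPf: "Pf c u mu i j differentiable (at R)" if "i \<noteq> j" "R \<in> U" for i j R
    using smooth_diffble[OF Pf_sm[OF that(1)] that(2)] .
  have du: "pd i u differentiable (at R)" if "R \<in> U" for i R
    using smooth_diffble[OF smooth_pd[OF u_smooth] that] .
  have cont: "continuous (at R) f" if "smooth_on U f" "R \<in> U" for f R
    using smooth_diffble[OF that] differentiable_imp_continuous_within by blast
  have Bsym: "2 * (a - b) / (x - y) * p * q = 2 * (b - a) / (y - x) * q * (p::real)" for a b x y p q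
  proof -
    have "(b - a) / (y - x) = (- (a - b)) / (- (x - y))" by simp
    also have "\<dots> = (a - b) / (x - y)" by (rule minus_divide_divide)
    finally have "(b - a) / (y - x) = (a - b) / (x - y)" .
    have "2 * (a - b) / (x - y) * p * q = 2 * ((a - b) / (x - y)) * (p * q)" by simp
    also have "\<dots> = 2 * ((b - a) / (y - x)) * (q * p)" using \<open>(b - a) / (y - x) = (a - b) / (x - y)\<close> by (simp add: mult.commute)
    also have "\<dots> = 2 * (b - a) / (y - x) * q * p" by simp
    finally show ?thesis .
  qed
  have PfA: "Pf c u mu i j R = pd j (mu i) R - (mu j R - mu i R)^2 / (c j (R$j) - c i (R$i)) * pd j u R" for i j R
    by (simp add: Pf_def sq_div[of "mu i R" "mu j R" "c i (R$i)" "c j (R$j)"])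
  define I1 where "I1 \<longleftrightarrow> (\<forall>R\<in>U. \<forall>i k j. i \<noteq> j \<and> k \<noteq> j \<longrightarrow> Pf c u mu i j R = Pf c u mu k j R)"
  define I2 where "I2 \<longleftrightarrow> (\<forall>R\<in>U. \<forall>i j k l. i \<noteq> j \<and> k \<noteq> i \<and> l \<noteq> j \<longrightarrow>
             pd j (Pf c u mu k i) R = pd i (Pf c u mu l j) R)"
  define I3 where "I3 \<longleftrightarrow> (\<forall>R\<in>U. \<forall>i j. i \<noteq> j \<longrightarrow>
             pd i (pd j u) R = 2 * (mu j R - mu i R) / (c j (R$j) - c i (R$i)) * pd i u R * pd j u R)"
  define ELU where "ELU \<longleftrightarrow> (\<forall>R\<in>U. multiform_EL (Lag c) (flds u mu) R)"
  have ELU_iff: "ELU \<longleftrightarrow> (\<forall>R\<in>U. \<forall>i j k. i \<noteq> j \<and> j \<noteq> k \<and> i \<noteq> k \<longrightarrow>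
       pd i (Pf c u mu i j) R = pd j (Pf c u mu j i) R \<and> Pf c u mu j i R = Pf c u mu k i R
     \<and> pd i (pd j u) R = 2 * (mu j R - mu i R) / (c j (R$j) - c i (R$i)) * pd i u R * pd j u R
     \<and> pd j (pd i u) R = 2 * (mu j R - mu i R) / (c j (R$j) - c i (R$i)) * pd i u R * pd j u R)"
    unfolding ELU_def by (rule ball_cong[OF refl], rule EL_iff, (blast intro: dPf du)+)
  have ELD: "pd i (Pf c u mu i j) R = pd j (Pf c u mu j i) R \<and> Pf c u mu j i R = Pf c u mu k i R
     \<and> pd i (pd j u) R = 2 * (mu j R - mu i R) / (c j (R$j) - c i (R$i)) * pd i u R * pd j u R"
    if "ELU" "R \<in> U" "i \<noteq> j" "j \<noteq> k" "i \<noteq> k" for R i j k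
  proof -
    have "\<forall>R\<in>U. \<forall>i j k. i \<noteq> j \<and> j \<noteq> k \<and> i \<noteq> k \<longrightarrow>
       pd i (Pf c u mu i j) R = pd j (Pf c u mu j i) R \<and> Pf c u mu j i R = Pf c u mu k i R
     \<and> pd i (pd j u) R = 2 * (mu j R - mu i R) / (c j (R$j) - c i (R$i)) * pd i u R * pd j u R
     \<and> pd j (pd i u) R = 2 * (mu j R - mu i R) / (c j (R$j) - c i (R$i)) * pd i u R * pd j u R"
      by (rule iffD1[OF ELU_iff that(1)])
    hence "i \<noteq> j \<and> j \<noteq> k \<and> i \<noteq> k \<longrightarrow>
       pd i (Pf c u mu i j) R = pd j (Pf c u mu j i) R \<and> Pf c u mu j i R = Pf c u mu k i R
     \<and> pd i (pd j u) R = 2 * (mu j R - mu i R) / (c j (R$j) - c i (R$i)) * pd i u R * pd j u R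
     \<and> pd j (pd i u) R = 2 * (mu j R - mu i R) / (c j (R$j) - c i (R$i)) * pd i u R * pd j u R"
      using that(2) by blast
    thus ?thesis using that(3-5) by simp
  qed
  have I1D: "Pf c u mu i j R = Pf c u mu k j R" if "I1" "R \<in> U" "i \<noteq> j" "k \<noteq> j" for R i j k
    using that unfolding I1_def by blast
  have I2D: "pd j (Pf c u mu k i) R = pd i (Pf c u mu l j) R" if "I2" "R \<in> U" "i \<noteq> j" "k \<noteq> i" "l \<noteq> j" for R i j k l
    using that unfolding I2_def by blast
  have I3D: "pd i (pd j u) R = 2 * (mu j R - mu i R) / (c j (R$j) - c i (R$i)) * pd i u R * pd j u R"
    if "I3" "R \<in> U" "i \<noteq> j" for R i j
    using that unfolding I3_def by blast
  have part1: "ELU \<longleftrightarrow> I1 \<and> I2 \<and> I3"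
  proof
    assume E: ELU
    have i3: I3 unfolding I3_def
    proof (intro ballI allI impI)
      fix R i j assume R: "R \<in> U" and ij: "(i::'n) \<noteq> j"
      obtain k where "k \<noteq> i \<and> k \<noteq> j" using third by blast
      thus "pd i (pd j u) R = 2 * (mu j R - mu i R) / (c j (R$j) - c i (R$i)) * pd i u R * pd j u R"
        using ELD[OF E R ij, of k] by auto
    qed
    have i1: I1 unfolding I1_def
    proof (intro ballI allI impI)
      fix R i k j assume R: "R \<in> U" and h: "(i::'n) \<noteq> j \<and> k \<noteq> j"
      show "Pf c u mu i j R = Pf c u mu k j R"
      proof (cases "i = k")
        case False thus ?thesis using ELD[OF E R, of j i k] h by auto
      qed simp
    qed
    have i2: I2 unfolding I2_def
    proof (intro ballI allI impI)
      fix R i j k l assume R: "R \<in> U" and h: "(i::'n) \<noteq> j \<and> k \<noteq> i \<and> l \<noteq> j"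
      obtain m where m: "m \<noteq> i \<and> m \<noteq> j" using third by blast
      have a: "pd i (Pf c u mu i j) R = pd j (Pf c u mu j i) R" using ELD[OF E R, of i j m] h m by auto
      have b: "pd j (Pf c u mu k i) R = pd j (Pf c u mu j i) R"
        by (rule pd_local[OF U_open R]) (rule I1D[OF i1], use h in auto)
      have c: "pd i (Pf c u mu l j) R = pd i (Pf c u mu i j) R"
        by (rule pd_local[OF U_open R]) (rule I1D[OF i1], use h in auto)
      show "pd j (Pf c u mu k i) R = pd i (Pf c u mu l j) R" using a b c by simp
    qed
    show "I1 \<and> I2 \<and> I3" using i1 i2 i3 by blast
  next
    assume H: "I1 \<and> I2 \<and> I3"
    show ELU unfolding ELU_iff
    proof (intro ballI allI impI conjI)
      fix R i j k assume R: "R \<in> U" and d: "(i::'n) \<noteq> j \<and> j \<noteq> k \<and> i \<noteq> k"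
      show "pd i (Pf c u mu i j) R = pd j (Pf c u mu j i) R"
        using I2D[of R i j j i] H R d by auto
      show "Pf c u mu j i R = Pf c u mu k i R"
        using I1D[of R j i k] H R d by auto
      show "pd i (pd j u) R = 2 * (mu j R - mu i R) / (c j (R$j) - c i (R$i)) * pd i u R * pd j u R"
        using I3D[of R i j] H R d by auto
      have "pd j (pd i u) R = 2 * (mu i R - mu j R) / (c i (R$i) - c j (R$j)) * pd j u R * pd i u R"
        using I3D[of R j i] H R d by auto
      thus "pd j (pd i u) R = 2 * (mu j R - mu i R) / (c j (R$j) - c i (R$i)) * pd i u R * pd j u R"
        unfolding Bsym[of "mu j R" "mu i R" "c j (R$j)" "c i (R$i)" "pd i u R" "pd j u R"] .
    qed
  qed
  define Q where "Q V P \<longleftrightarrow> (\<forall>R\<in>V. \<forall>i j. i \<noteq> j \<longrightarrow>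
             pd j (mu i) R = (mu j R - mu i R)^2 / (c j (R$j) - c i (R$i)) * pd j u R + pd j P R
           \<and> pd i (pd j u) R = 2 * (mu j R - mu i R) / (c j (R$j) - c i (R$i)) * pd i u R * pd j u R)" for V P
  have QPf: "pd j P R = Pf c u mu i j R" if "Q V P" "R \<in> V" "i \<noteq> j" for V P R i j
  proof -
    have "pd j (mu i) R = (mu j R - mu i R)^2 / (c j (R$j) - c i (R$i)) * pd j u R + pd j P R"
      using that unfolding Q_def by blast
    thus ?thesis unfolding PfA by simp
  qed
  have part2: "ELU \<longleftrightarrow> (\<forall>R0\<in>U. \<exists>V P. open V \<and> R0 \<in> V \<and> V \<subseteq> U \<and> (\<forall>R\<in>V. P differentiable (at R)) \<and> Q V P)"
  proof
    assume E: ELU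
    hence I: I1 I2 I3 using part1 by auto
    show "\<forall>R0\<in>U. \<exists>V P. open V \<and> R0 \<in> V \<and> V \<subseteq> U \<and> (\<forall>R\<in>V. P differentiable (at R)) \<and> Q V P"
    proof
      fix R0 assume R0: "R0 \<in> U"
      obtain r where r: "r > 0" "ball R0 r \<subseteq> U" using U_open R0 open_contains_ball by blast
      define F where "F m = Pf c u mu (SOME k. k \<noteq> m) m" for m
      have sk: "(SOME k. k \<noteq> m) \<noteq> m" for m :: 'n
      proof -
        have "\<exists>k. k \<noteq> m" using third[of m m] by blast
        from someI_ex[OF this] show ?thesis .
      qed
      have Fsm: "smooth_on U (F m)" for m unfolding F_def using Pf_sm[OF sk] .
      obtain P where P: "\<forall>x\<in>ball R0 r. P differentiable (at x)" "\<forall>x\<in>ball R0 r. \<forall>k. pd k P x = F k x"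
      proof (rule exE[OF poincare[OF r(1)]])
        show "F m differentiable (at x)" if "x \<in> ball R0 r" for m x
          using smooth_diffble[OF Fsm] that r(2) by blast
        show "continuous_on (ball R0 r) (pd j (F m))" for m j
          using cont[OF smooth_pd[OF Fsm]] r(2) by (meson continuous_at_imp_continuous_on subsetD)
        show "pd j (F m) x = pd m (F j) x" if x: "x \<in> ball R0 r" for m j x
        proof (cases "j = m")
          case False
          thus ?thesis using I2D[OF I(2), of x m j "SOME k. k \<noteq> m" "SOME k. k \<noteq> j"] x r(2) sk unfolding F_def by blast
        qed simp
      qed blast
      have "Q (ball R0 r) P" unfolding Q_def
      proof (intro ballI allI impI conjI)
        fix R i j assume R: "R \<in> ball R0 r" and ij: "(i::'n) \<noteq> j"
        have RU: "R \<in> U" using R r(2) by blast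
        have "pd j P R = F j R" using P(2) R by blast
        also have "\<dots> = Pf c u mu i j R" unfolding F_def by (rule I1D[OF I(1) RU sk ij])
        finally have "pd j P R = Pf c u mu i j R" .
        thus "pd j (mu i) R = (mu j R - mu i R)^2 / (c j (R$j) - c i (R$i)) * pd j u R + pd j P R"
          unfolding PfA by simp
        show "pd i (pd j u) R = 2 * (mu j R - mu i R) / (c j (R$j) - c i (R$i)) * pd i u R * pd j u R"
          using I(3)[unfolded I3_def] RU ij by blast
      qed
      thus "\<exists>V P. open V \<and> R0 \<in> V \<and> V \<subseteq> U \<and> (\<forall>R\<in>V. P differentiable (at R)) \<and> Q V P"
        using r P(1) by (intro exI[of _ "ball R0 r"] exI[of _ P]) auto
    qed
  next
    assume H: "\<forall>R0\<in>U. \<exists>V P. open V \<and> R0 \<in> V \<and> V \<subseteq> U \<and> (\<forall>R\<in>V. P differentiable (at R)) \<and> Q V P"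
    have i3: I3 unfolding I3_def
    proof (intro ballI allI impI)
      fix R i j assume R: "R \<in> U" and ij: "(i::'n) \<noteq> j"
      obtain V P where "R \<in> V" "Q V P" using H R by blast
      thus "pd i (pd j u) R = 2 * (mu j R - mu i R) / (c j (R$j) - c i (R$i)) * pd i u R * pd j u R"
        unfolding Q_def using ij by blast
    qed
    have i1: I1 unfolding I1_def
    proof (intro ballI allI impI)
      fix R i k j assume R: "R \<in> U" and h: "(i::'n) \<noteq> j \<and> k \<noteq> j"
      obtain V P where "R \<in> V" "Q V P" using H R by blast
      thus "Pf c u mu i j R = Pf c u mu k j R" using QPf[of V P R i j] QPf[of V P R k j] h by simp
    qed
    have i2: I2 unfolding I2_def
    proof (intro ballI allI impI)
      fix R i j k l assume R: "R \<in> U" and h: "(i::'n) \<noteq> j \<and> k \<noteq> i \<and> l \<noteq> j"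
      obtain V P where V: "open V" "R \<in> V" "V \<subseteq> U" "\<forall>R\<in>V. P differentiable (at R)" "Q V P"
        using H R by blast
      show "pd j (Pf c u mu k i) R = pd i (Pf c u mu l j) R"
      proof (rule clairaut[OF V(1,2)])
        show "P differentiable (at x)" if "x \<in> V" for x using V(4) that by blast
        show "pd i P x = Pf c u mu k i x" if "x \<in> V" for x using QPf[OF V(5) that] h by blast
        show "pd j P x = Pf c u mu l j x" if "x \<in> V" for x using QPf[OF V(5) that] h by blast
        show "Pf c u mu k i differentiable (at x)" if "x \<in> V" for x using dPf h that V(3) by blast
        show "Pf c u mu l j differentiable (at x)" if "x \<in> V" for x using dPf h that V(3) by blast
        show "continuous (at R) (pd j (Pf c u mu k i))" using cont[OF smooth_pd[OF Pf_sm] R] h by blast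
        show "continuous (at R) (pd i (Pf c u mu l j))" using cont[OF smooth_pd[OF Pf_sm] R] h by blast
      qed
    qed
    show ELU by (rule part1[THEN iffD2]) (intro conjI i1 i2 i3)
  qed
  have part3: "Q V P \<longleftrightarrow> (\<forall>R\<in>V. \<forall>i j. i \<noteq> j \<longrightarrow>
             pd j (\<lambda>x. mu i x - P x) R
               = ((mu j R - P R) - (mu i R - P R))^2 / (c j (R$j) - c i (R$i)) * pd j u R
           \<and> pd i (pd j u) R
               = 2 * ((mu j R - P R) - (mu i R - P R)) / (c j (R$j) - c i (R$i)) * pd i u R * pd j u R)"
    if "open V" "V \<subseteq> U" "\<forall>R\<in>V. P differentiable (at R)" for V P
  proof -
    have e2: "pd j (\<lambda>x. mu i x - P x) R = pd j (mu i) R - pd j P R" if "R \<in> V" for R i j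
    proof -
      have "R \<in> U" using that \<open>V \<subseteq> U\<close> by blast
      hence "mu i differentiable (at R)" by (rule smooth_diffble[OF mu_smooth])
      moreover have "P differentiable (at R)" using that \<open>\<forall>R\<in>V. P differentiable (at R)\<close> by blast
      ultimately show ?thesis by (rule pd_diff)
    qed
    have e1: "(mu j R - P R) - (mu i R - P R) = mu j R - mu i R" for R i j by simp
    have gen: "((X::real) = Y + Z \<and> W) \<longleftrightarrow> (X - Z = Y \<and> W)" for X Y Z W by auto
    have pt: "(pd j (mu i) R = (mu j R - mu i R)^2 / (c j (R$j) - c i (R$i)) * pd j u R + pd j P R
           \<and> pd i (pd j u) R = 2 * (mu j R - mu i R) / (c j (R$j) - c i (R$i)) * pd i u R * pd j u R)
       \<longleftrightarrow> (pd j (\<lambda>x. mu i x - P x) R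
               = ((mu j R - P R) - (mu i R - P R))^2 / (c j (R$j) - c i (R$i)) * pd j u R
           \<and> pd i (pd j u) R
               = 2 * ((mu j R - P R) - (mu i R - P R)) / (c j (R$j) - c i (R$i)) * pd i u R * pd j u R)"
      if "R \<in> V" for R i j
      unfolding e1 e2[OF that] by (rule gen)
    show ?thesis unfolding Q_def
    proof (intro iffI ballI allI impI)
      fix R i j assume H: "\<forall>R\<in>V. \<forall>i j. i \<noteq> j \<longrightarrow>
             pd j (mu i) R = (mu j R - mu i R)^2 / (c j (R$j) - c i (R$i)) * pd j u R + pd j P R
           \<and> pd i (pd j u) R = 2 * (mu j R - mu i R) / (c j (R$j) - c i (R$i)) * pd i u R * pd j u R"
        and R: "R \<in> V" and ij: "(i::'n) \<noteq> j"
      have "pd j (mu i) R = (mu j R - mu i R)^2 / (c j (R$j) - c i (R$i)) * pd j u R + pd j P R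
           \<and> pd i (pd j u) R = 2 * (mu j R - mu i R) / (c j (R$j) - c i (R$i)) * pd i u R * pd j u R"
        using H R ij by blast
      thus "pd j (\<lambda>x. mu i x - P x) R
               = ((mu j R - P R) - (mu i R - P R))^2 / (c j (R$j) - c i (R$i)) * pd j u R
           \<and> pd i (pd j u) R
               = 2 * ((mu j R - P R) - (mu i R - P R)) / (c j (R$j) - c i (R$i)) * pd i u R * pd j u R"
        using pt[OF R] by (rule iffD1[rotated])
    next
      fix R i j assume H: "\<forall>R\<in>V. \<forall>i j. i \<noteq> j \<longrightarrow>
             pd j (\<lambda>x. mu i x - P x) R
               = ((mu j R - P R) - (mu i R - P R))^2 / (c j (R$j) - c i (R$i)) * pd j u R
           \<and> pd i (pd j u) R
               = 2 * ((mu j R - P R) - (mu i R - P R)) / (c j (R$j) - c i (R$i)) * pd i u R * pd j u R"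
        and R: "R \<in> V" and ij: "(i::'n) \<noteq> j"
      have "pd j (\<lambda>x. mu i x - P x) R
               = ((mu j R - P R) - (mu i R - P R))^2 / (c j (R$j) - c i (R$i)) * pd j u R
           \<and> pd i (pd j u) R
               = 2 * ((mu j R - P R) - (mu i R - P R)) / (c j (R$j) - c i (R$i)) * pd i u R * pd j u R"
        using H R ij by blast
      thus "pd j (mu i) R = (mu j R - mu i R)^2 / (c j (R$j) - c i (R$i)) * pd j u R + pd j P R
           \<and> pd i (pd j u) R = 2 * (mu j R - mu i R) / (c j (R$j) - c i (R$i)) * pd i u R * pd j u R"
        using pt[OF R] by (rule iffD2[rotated])
    qed
  qed
  show ?thesis
    unfolding ELU_def[symmetric] I1_def[symmetric] I2_def[symmetric] I3_def[symmetric] Q_def[symmetric]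
    by (intro conjI part1 part2 allI impI part3)
qed


end
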